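(* Let $p$ be a prime, and let $m$ and $n$ be integers with $n \geq 1$ and $n+2 \leq m \leq (p-1)/2$. Let $\lambda = (\lambda_1, \ldots, \lambda_m)$ be a sequence of integers with $p \geq \lambda_1 \geq \cdots \geq \lambda_m > 0$ and $\sum_{k=1}^m \lambda_k \geq np + 1$. Let $\mu = (\mu_1, \ldots, \mu_{2m - 1})$ be a sequence of integers such that $\mu_{i + j - 1} \geq \min\{\lambda_i + \lambda_j - 1, p\}$ for all $1 \leq i, j \leq m$. Then \[\sum_{k = 1}^{2m-1} \mu_k \geq (2n + 1)p.\] *)

theory Defs
  imports "HOL-Computational_Algebra.Primes"
begin

end

theory Submission
  imports Defs
begin

lemma S1: "(\<Sum>k=1..2*Suc m-1. f k) = (\<Sum>k=1..Suc m. f k) + (\<Sum>i=2..Suc m. (f (Suc m+i-1) :: int))"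
proof -
  have u: "{1..2*Suc m-1} = {1..Suc m} \<union> {2+m..Suc m+m}" by auto
  have "(\<Sum>k=1..2*Suc m-1. f k) = (\<Sum>k=1..Suc m. f k) + (\<Sum>k=2+m..Suc m+m. f k)"
    unfolding u by (rule sum.union_disjoint) auto
  also have "(\<Sum>k=2+m..Suc m+m. f k) = (\<Sum>i=2..Suc m. f (i+m))"
    by (rule sum.shift_bounds_cl_nat_ivl)
  also have "\<dots> = (\<Sum>i=2..Suc m. f (Suc m+i-1))"
    by (rule sum.cong) (auto simp: add.commute)
  finally show ?thesis .
qed

lemma S2: "(\<Sum>k=1..2*Suc m-1. f k) = (\<Sum>k=1..Suc m. f (2*k-1)) + (\<Sum>k=1..m. (f (2*k) :: int))"
proof (induction m)
  case 0 then show ?case by simp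
next
  case (Suc m)
  have e: "2*Suc (Suc m) - 1 = Suc (Suc (2*Suc m - 1))" by simp
  show ?case unfolding e using Suc by (simp add: algebra_simps)
qed

lemma S3: "(\<Sum>k=1..m. (g (k+1)::int)) = (\<Sum>k=2..Suc m. g k)"
  using sum.shift_bounds_cl_Suc_ivl[of g 1 m] by (simp add: numeral_2_eq_2)

lemma mono_lam:
  fixes lam :: "nat \<Rightarrow> int"
  assumes "\<And>k. 1 \<le> k \<Longrightarrow> k < m \<Longrightarrow> lam k \<ge> (lam (k + 1) :: int)"
  shows "1 \<le> i \<Longrightarrow> i \<le> j \<Longrightarrow> j \<le> m \<Longrightarrow> lam j \<le> lam i"
proof (induction j)
  case 0 then show ?case by simp
next
  case (Suc j)
  show ?case
  proof (cases "i = Suc j")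
    case True then show ?thesis by simp
  next
    case False
    then have "i \<le> j" using Suc by simp
    then have "lam j \<le> lam i" using Suc by simp
    moreover have "lam (Suc j) \<le> lam j" using assms[of j] Suc \<open>i \<le> j\<close> by simp
    ultimately show ?thesis by simp
  qed
qed

theorem mainTheorem7:
  fixes p m n :: nat and lam mu :: "nat \<Rightarrow> int"
  assumes "prime p"
    and "n \<ge> 1" and "n + 2 \<le> m" and "2 * m \<le> p - 1"
    and "lam 1 \<le> int p"
    and "\<And>k. 1 \<le> k \<Longrightarrow> k < m \<Longrightarrow> lam k \<ge> lam (k + 1)"
    and "lam m > 0"
    and "(\<Sum>k=1..m. lam k) \<ge> int n * int p + 1"
    and "\<And>i j. 1 \<le> i \<Longrightarrow> i \<le> m \<Longrightarrow> 1 \<le> j \<Longrightarrow> j \<le> m \<Longrightarrow>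
           mu (i + j - 1) \<ge> min (lam i + lam j - 1) (int p)"
  shows "(\<Sum>k=1..2*m-1. mu k) \<ge> (2 * int n + 1) * int p"
proof -
  define P where "P = int p"
  define L where "L = lam 1"
  define T where "T = (\<Sum>k=1..m. lam k)"
  have "(\<Sum>k=1..2*m-1. mu k) \<ge> (2 * int n + 1) * P"
  proof -
  obtain m' where mm: "m = Suc m'" using assms(3) by (cases m) auto
  have p7: "p \<ge> 7" using assms(2-4) by linarith
  have podd: "odd p" using assms(1) p7 prime_odd_nat by auto
  have mon: "\<And>i j. 1 \<le> i \<Longrightarrow> i \<le> j \<Longrightarrow> j \<le> m \<Longrightarrow> lam j \<le> lam i"
    using mono_lam[of m lam] assms(6) by blast
  have pos: "lam k \<ge> 1" if "1 \<le> k" "k \<le> m" for k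
  proof -
    have "lam m \<le> lam k" using mon[of k m] that by simp
    then show ?thesis using assms(7) by linarith
  qed
  have leL: "\<And>k. 1 \<le> k \<Longrightarrow> k \<le> m \<Longrightarrow> lam k \<le> L"
    using mon[of 1] unfolding L_def by simp
  have LP: "L \<le> P" using assms(5) by (simp add: L_def P_def)
  have TL: "(\<Sum>i=2..m. lam i) = T - L"
    unfolding T_def L_def mm by (simp add: sum.atLeast_Suc_atMost numeral_2_eq_2)
  have hT: "T \<ge> int n * P + 1" using assms(8) by (simp add: T_def P_def)
  have F1: "(\<Sum>k=1..2*m-1. mu k) \<ge> (\<Sum>k=1..m. min (L + lam k - 1) P) + (T - L)"
  proof -
    have "(\<Sum>k=1..2*m-1. mu k) = (\<Sum>k=1..m. mu k) + (\<Sum>i=2..m. mu (m+i-1))"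
      unfolding mm by (rule S1)
    moreover have "(\<Sum>k=1..m. mu k) \<ge> (\<Sum>k=1..m. min (L + lam k - 1) P)"
    proof (rule sum_mono)
      fix k assume "k \<in> {1..m}"
      then show "min (L + lam k - 1) P \<le> mu k"
        using assms(9)[of 1 k] by (simp add: L_def P_def)
    qed
    moreover have "(\<Sum>i=2..m. mu (m+i-1)) \<ge> (\<Sum>i=2..m. lam i)"
    proof (rule sum_mono)
      fix i assume i: "i \<in> {2..m}"
      have "mu (m+i-1) \<ge> min (lam m + lam i - 1) (int p)"
        using assms(9)[of m i] i mm by simp
      moreover have "lam m \<ge> 1" "lam i \<le> P" using pos[of m] leL[of i] LP i mm by auto
      ultimately show "lam i \<le> mu (m+i-1)" by (simp add: P_def)
    qed
    ultimately show ?thesis using TL by linarith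
  qed
  show ?thesis
  proof (cases "2 * L \<ge> P + 1")
    case True
    show ?thesis
    proof (cases "lam (m-1) \<ge> P - L + 2")
      case True
      have "(\<Sum>k=1..m. min (L + lam k - 1) P) = (\<Sum>k=1..m'. min (L + lam k - 1) P) + min (L + lam m - 1) P"
        unfolding mm by simp
      moreover have "(\<Sum>k=1..m'. min (L + lam k - 1) P) = (\<Sum>k=1..m'. P)"
      proof (rule sum.cong)
        fix k assume k: "k \<in> {1..m'}"
        have "lam k \<ge> lam (m-1)" using mon[of k "m-1"] k mm by auto
        then show "min (L + lam k - 1) P = P" using True by simp
      qed simp
      moreover have "min (L + lam m - 1) P \<ge> L" using pos[of m] LP mm by simp
      moreover have "int m' * P \<ge> (int n + 1) * P"
        using assms(3) mm P_def by (intro mult_right_mono) auto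
      moreover have "(int n + 1) * P = int n * P + P" "(2 * int n + 1) * P = 2*(int n * P) + P"
        by (simp_all add: algebra_simps)
      moreover have "(\<Sum>k=1..m'. P) = int m' * P" by simp
      ultimately show ?thesis using F1 hT by linarith
    next
      case False
      have m3: "m \<ge> 3" using assms(2,3) by simp
      let ?D = "\<lambda>k. min (L + lam k - 1) P - lam k"
      have nn: "?D k \<ge> 0" if "k \<in> {1..m}" for k
      proof -
        have "lam k \<le> L" "lam 1 \<ge> 1" using leL[of k] pos[of 1] that m3 by auto
        then show ?thesis using LP unfolding L_def by linarith
      qed
      have sub: "{1, m-1, m} \<subseteq> {1..m}" using m3 by auto
      have "(\<Sum>k\<in>{1, m-1, m}. ?D k) \<le> (\<Sum>k=1..m. ?D k)"
        by (rule sum_mono2) (use sub nn in auto)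
      moreover have "(\<Sum>k\<in>{1, m-1, m}. ?D k) = ?D 1 + ?D (m-1) + ?D m"
        using m3 by simp
      moreover have "?D 1 = P - L" using True by (simp add: L_def)
      moreover have "?D (m-1) = L - 1" using False by simp
      moreover have "?D m = L - 1"
      proof -
        have "lam m \<le> lam (m-1)" using mon[of "m-1" m] m3 by simp
        then show ?thesis using False by linarith
      qed
      moreover have "(\<Sum>k=1..m. ?D k) = (\<Sum>k=1..m. min (L + lam k - 1) P) - T"
        by (simp add: sum_subtractf T_def)
      ultimately have "(\<Sum>k=1..m. min (L + lam k - 1) P) \<ge> T + P + L - 2" by linarith
      moreover have "(2 * int n + 1) * P = 2*(int n * P) + P" by (simp add: algebra_simps)
      ultimately show ?thesis using F1 hT by linarith
    qed
  next
    case False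
    have oP: "odd P" using podd by (simp add: P_def)
    have "P \<noteq> 2 * L" using oP by auto
    then have B: "2 * L \<le> P - 1" using False by linarith
    have F2: "(\<Sum>k=1..2*m-1. mu k) \<ge> 4*T - 2*L - 2*int m + 1"
    proof -
      have "(\<Sum>k=1..2*m-1. mu k) = (\<Sum>k=1..m. mu (2*k-1)) + (\<Sum>k=1..m'. mu (2*k))"
        unfolding mm by (rule S2)
      moreover have "(\<Sum>k=1..m. mu (2*k-1)) \<ge> (\<Sum>k=1..m. 2 * lam k - 1)"
      proof (rule sum_mono)
        fix k assume k: "k \<in> {1..m}"
        have m1: "mu (k+k-1) \<ge> min (lam k + lam k - 1) P" using assms(9)[of k k] k by (simp add: P_def)
        have "lam k \<le> L" using leL k by simp
        then have "min (lam k + lam k - 1) P = lam k + lam k - 1" using B by linarith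
        moreover have "k+k-1 = 2*k-1" by simp
        ultimately show "2 * lam k - 1 \<le> mu (2*k-1)" using m1 by simp
      qed
      moreover have "(\<Sum>k=1..m'. mu (2*k)) \<ge> (\<Sum>k=1..m'. 2 * lam (k+1) - 1)"
      proof (rule sum_mono)
        fix k assume k: "k \<in> {1..m'}"
        have m1: "mu (k+(k+1)-1) \<ge> min (lam k + lam (k+1) - 1) P" using assms(9)[of k "k+1"] k mm by (simp add: P_def)
        have "lam k \<le> L" using leL k mm by simp
        moreover have "lam (k+1) \<le> lam k" using assms(6)[of k] k mm by simp
        ultimately have "min (lam k + lam (k+1) - 1) P = lam k + lam (k+1) - 1" using B by linarith
        moreover have ke: "k+(k+1)-1 = 2*k" by simp
        moreover have "mu (k+(k+1)-1) = mu (2*k)" by (simp only: ke)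
        ultimately show "2 * lam (k+1) - 1 \<le> mu (2*k)" using m1 \<open>lam (k+1) \<le> lam k\<close> by linarith
      qed
      moreover have "(\<Sum>k=1..m. 2 * lam k - 1) = 2 * T - int m"
        by (simp add: sum_subtractf sum_distrib_left T_def)
      moreover have "(\<Sum>k=1..m'. 2 * lam (k+1) - 1) = 2 * (T - L) - int m'"
      proof -
        have e1: "(\<Sum>k=1..m'. 2 * lam (k+1) - 1) = 2 * (\<Sum>k=1..m'. lam (k+1)) - int m'"
          by (simp add: sum_subtractf sum_distrib_left)
        have e2: "(\<Sum>k=1..m'. lam (k+1)) = (\<Sum>k=2..m. lam k)"
          unfolding mm by (rule S3)
        show ?thesis by (simp only: e1 e2 TL)
      qed
      ultimately show ?thesis using mm by simp
    qed
    have F1': "(\<Sum>k=1..2*m-1. mu k) \<ge> int m * L + 2 * T - int m - L"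
    proof -
      have "(\<Sum>k=1..m. min (L + lam k - 1) P) = (\<Sum>k=1..m. L + lam k - 1)"
      proof (rule sum.cong)
        fix x assume "x \<in> {1..m}"
        then have "lam x \<le> L" using leL by simp
        then show "min (L + lam x - 1) P = L + lam x - 1" using B by linarith
      qed simp
      also have "\<dots> = int m * L + T - int m" by (simp add: sum.distrib sum_subtractf T_def)
      finally show ?thesis using F1 by simp
    qed
    show ?thesis
    proof (rule ccontr)
      assume H: "\<not> ?thesis"
      have mP: "2 * int m \<le> P - 1" using assms(4) p7 unfolding P_def by linarith
      show False
      proof (cases "n = 1")
        case False
        then have "int n * P \<ge> 2 * P" using assms(2) P_def by (intro mult_right_mono) auto
        moreover have "(2 * int n + 1) * P = 2*(int n * P) + P" by (simp add: algebra_simps)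
        ultimately show False using H F2 hT B mP by linarith
      next
        case True
        have T1: "T \<ge> P + 1" using hT True by simp
        have H3: "(\<Sum>k=1..2*m-1. mu k) < 3 * P" using H True by simp
        have a0: "2 * L + 2 * int m > P + 5" using H3 F2 T1 by linarith
        obtain q where q: "P = 2*q+1" using oP by (blast elim: oddE)
        have "q + 3 < L + int m" using a0 q by linarith
        then have "q + 4 \<le> L + int m" by linarith
        then have a: "2 * L + 2 * int m \<ge> P + 7" using q by linarith
        have b: "int m * L < P + int m + L - 2" using H3 F1' T1 by linarith
        have c: "(P - 1 - 2 * int m) * (P - 1 - 2 * L) \<ge> 0" using mP B by simp
        have d: "(P - 1) * (2 * L + 2 * int m) \<ge> (P - 1) * (P + 7)"
          using a p7 P_def by (intro mult_left_mono) auto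
        have ce: "(P - 1 - 2 * int m) * (P - 1 - 2 * L) = P*P - 2*P - 2*(P*L) - 2*(P*int m) + 2*L + 2*int m + 4*(int m*L) + 1"
          by (simp add: algebra_simps)
        have de1: "(P - 1) * (2 * L + 2 * int m) = 2*(P*L) + 2*(P*int m) - 2*L - 2*int m"
          by (simp add: algebra_simps)
        have de2: "(P - 1) * (P + 7) = P*P + 6*P - 7"
          by (simp add: algebra_simps)
        show False using b c d ce de1 de2 mP B by linarith
      qed
    qed
  qed
qed
  then show ?thesis by (simp add: P_def)
qed
end
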